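(* There is an absolute constant $\tilde C\in\mathbb{R}^+$ such that the following holds. Fix $\epsilon,\eta\in(0,1/2)$ and $d\ge2$. Let $\mathcal{L}$ be an $r$-dimensional subspace of $\mathbb{C}^{n_1\times\cdots\times n_d}$ spanned by a basis of rank-one tensors $\mathcal{B}=\{\bigcirc_{\ell=1}^d\mathbf{y}^{(\ell)}_k:k\in[r]\}$ (with $\|\mathbf{y}^{(\ell)}_k\|_2=1$) whose modewise coherence satisfies $\mu_{\mathcal{B}}^{d-1}<1/(2r)$. For each $j\in[d]$ draw $\mathbf{A}_j\in\mathbb{C}^{m_j\times n_j}$ with $$m_j\ge\tilde C\cdot r^{2/d}d^2\epsilon^{-2}\ln(2r^2d/\eta)$$ from an $(\eta/d)$-optimal family of JL embedding distributions. Then with probability at least $1-\eta$, $$\big|\|\mathcal{Y}\times_1\mathbf{A}_1\cdots\times_d\mathbf{A}_d\|^2-\|\mathcal{Y}\|^2\big|\le\epsilon\|\mathcal{Y}\|^2\quad\text{for all }\mathcal{Y}\in\mathcal{L}.$$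
   Context: Tensors carry the inner product $\langle\mathcal{X},\mathcal{Y}\rangle=\sum\mathcal{X}_{i_1\dots i_d}\overline{\mathcal{Y}_{i_1\dots i_d}}$ and norm $\|\cdot\|$; $\bigcirc$ is the outer product; $(\mathcal{Z}\times_j\mathbf{U})_{i_1,\dots,\ell,\dots,i_d}=\sum_{i_j}\mathcal{Z}_{i_1,\dots,i_j,\dots,i_d}\mathbf{U}_{\ell,i_j}$. $\mu_{\mathcal{B}}=\max_{\ell\in[d]}\max_{k\ne h}|\langle\mathbf{y}^{(\ell)}_k,\mathbf{y}^{(\ell)}_h\rangle|$. A matrix $\mathbf{A}\in\mathbb{C}^{m\times n}$ is an $\epsilon$-JL embedding of $S$ if $\|\mathbf{A}x\|_2^2=(1+\epsilon_x)\|x\|_2^2$ with $\epsilon_x\in(-\epsilon,\epsilon)$ for all $x\in S$. For $\eta\in(0,1/2)$, a family $\{\mathcal{D}_{(m,n)}\}$ of distributions over $m\times n$ matrices is $\eta$-optimal if there is an absolute $C>0$ such that for all $\epsilon\in(0,1)$, $m<n$, and nonempty $S\subset\mathbb{C}^n$ with $|S|\le\eta\exp(\epsilon^2m/C)$, $\mathbf{A}\sim\mathcal{D}_{(m,n)}$ is an $\epsilon$-JL embedding of $S$ with probability at least $1-\eta$. *)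

theory Defs
  imports "HOL-Probability.Probability"
begin

text \<open>Indices are 0-based. A vector of \<open>\<complex>^n\<close> is a function
  \<open>nat \<Rightarrow> complex\<close> of which only the coordinates \<open>< n\<close> matter; an
  \<open>m \<times> n\<close> matrix is \<open>nat \<Rightarrow> nat \<Rightarrow> complex\<close> (entry \<open>A i j\<close>, \<open>i < m\<close>, \<open>j < n\<close>).
  A \<open>d\<close>-mode tensor of size \<open>n 0 \<times> \<dots> \<times> n (d-1)\<close> is a function on multi-indices
  \<open>(nat \<Rightarrow> nat)\<close>; only the multi-indices in \<open>tidx n d\<close> matter.\<close>

type_synonym cvec = "nat \<Rightarrow> complex"
type_synonym cmat = "nat \<Rightarrow> nat \<Rightarrow> complex"
type_synonym tensor = "(nat \<Rightarrow> nat) \<Rightarrow> complex"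

definition vinner :: "nat \<Rightarrow> cvec \<Rightarrow> cvec \<Rightarrow> complex" where
  "vinner n x y = (\<Sum>i<n. x i * cnj (y i))"

definition vnorm_sq :: "nat \<Rightarrow> cvec \<Rightarrow> real" where
  "vnorm_sq n x = (\<Sum>i<n. (cmod (x i))\<^sup>2)"

definition mat_vec :: "nat \<Rightarrow> cmat \<Rightarrow> cvec \<Rightarrow> cvec" where
  "mat_vec n A x = (\<lambda>i. \<Sum>j<n. A i j * x j)"

definition is_JL_embedding :: "real \<Rightarrow> nat \<Rightarrow> nat \<Rightarrow> cmat \<Rightarrow> cvec set \<Rightarrow> bool" where
  "is_JL_embedding \<epsilon> m n A S \<longleftrightarrow>
     (\<forall>x\<in>S. \<exists>e. -\<epsilon> < e \<and> e < \<epsilon> \<and> vnorm_sq m (mat_vec n A x) = (1 + e) * vnorm_sq n x)"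

text \<open>Probability (inner probability, to avoid measurability side conditions) that a
  property holds: some measurable event of probability at least \<open>p\<close> is contained in it.\<close>
definition holds_with_prob_ge :: "'a measure \<Rightarrow> ('a \<Rightarrow> bool) \<Rightarrow> real \<Rightarrow> bool" where
  "holds_with_prob_ge M P p \<longleftrightarrow>
     (\<exists>E\<in>sets M. E \<subseteq> {x\<in>space M. P x} \<and> measure M E \<ge> p)"

definition eta_optimal_with :: "real \<Rightarrow> real \<Rightarrow> (nat \<Rightarrow> nat \<Rightarrow> cmat measure) \<Rightarrow> bool" where
  "eta_optimal_with C \<eta> D \<longleftrightarrow>
     C > 0 \<and> (\<forall>m n. prob_space (D m n)) \<and>
     (\<forall>\<epsilon> m n S. 0 < \<epsilon> \<and> \<epsilon> < 1 \<and> m < n \<and> S \<noteq> {} \<and> finite S \<and>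
        real (card S) \<le> \<eta> * exp (\<epsilon>\<^sup>2 * real m / C) \<longrightarrow>
        holds_with_prob_ge (D m n) (\<lambda>A. is_JL_embedding \<epsilon> m n A S) (1 - \<eta>))"

definition eta_optimal :: "real \<Rightarrow> (nat \<Rightarrow> nat \<Rightarrow> cmat measure) \<Rightarrow> bool" where
  "eta_optimal \<eta> D \<longleftrightarrow> (\<exists>C. eta_optimal_with C \<eta> D)"

definition tidx :: "(nat \<Rightarrow> nat) \<Rightarrow> nat \<Rightarrow> (nat \<Rightarrow> nat) set" where
  "tidx n d = PiE {..<d} (\<lambda>l. {..<n l})"

definition tnorm_sq :: "(nat \<Rightarrow> nat) \<Rightarrow> nat \<Rightarrow> tensor \<Rightarrow> real" where
  "tnorm_sq n d X = (\<Sum>i\<in>tidx n d. (cmod (X i))\<^sup>2)"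

definition outer :: "nat \<Rightarrow> (nat \<Rightarrow> cvec) \<Rightarrow> tensor" where
  "outer d y = (\<lambda>i. \<Prod>l<d. y l (i l))"

definition mode_prod :: "tensor \<Rightarrow> nat \<Rightarrow> nat \<Rightarrow> cmat \<Rightarrow> tensor" where
  "mode_prod Z j nj U = (\<lambda>i. \<Sum>k<nj. Z (i(j := k)) * U (i j) k)"

primrec modes_prod :: "tensor \<Rightarrow> (nat \<Rightarrow> nat) \<Rightarrow> (nat \<Rightarrow> cmat) \<Rightarrow> nat \<Rightarrow> tensor" where
  "modes_prod Y n A 0 = Y"
| "modes_prod Y n A (Suc j) = mode_prod (modes_prod Y n A j) j (n j) (A j)"

definition coherence :: "(nat \<Rightarrow> nat) \<Rightarrow> nat \<Rightarrow> nat \<Rightarrow> (nat \<Rightarrow> nat \<Rightarrow> cvec) \<Rightarrow> real" where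
  "coherence n d r y =
     Max ({0} \<union> {cmod (vinner (n l) (y l k) (y l h)) | l k h. l < d \<and> k < r \<and> h < r \<and> k \<noteq> h})"

end

theory Submission
  imports Defs
begin


definition Yc :: "nat \<Rightarrow> nat \<Rightarrow> (nat \<Rightarrow> complex) \<Rightarrow> (nat \<Rightarrow> nat \<Rightarrow> cvec) \<Rightarrow> tensor" where
  "Yc d r c z = (\<lambda>i. \<Sum>k<r. c k * outer d (\<lambda>l. z l k) i)"

lemma mode_prod_Yc:
  assumes "j < d"
  shows "mode_prod (Yc d r c z) j nj U =
     Yc d r c (\<lambda>l k. if l = j then mat_vec nj U (z l k) else z l k)"
proof
  fix i
  have fin: "finite {..<d}" by simp
  have rem: "\<And>f. (\<Prod>l<d. f l) = f j * (\<Prod>l\<in>{..<d}-{j}. f l)"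
    using prod.remove[OF fin, of j] assms by simp
  have "mode_prod (Yc d r c z) j nj U i
      = (\<Sum>q<nj. \<Sum>k<r. c k * (z j k q * (\<Prod>l\<in>{..<d}-{j}. z l k (i l))) * U (i j) q)"
    unfolding mode_prod_def Yc_def outer_def
    apply (simp add: sum_distrib_right)
    apply (intro sum.cong refl)
    apply (subst rem)
    apply (simp)
    done
  also have "\<dots> = (\<Sum>k<r. c k * (mat_vec nj U (z j k) (i j) * (\<Prod>l\<in>{..<d}-{j}. z l k (i l))))"
    apply (subst sum.swap)
    apply (intro sum.cong refl)
    apply (simp add: mat_vec_def sum_distrib_left sum_distrib_right)
    apply (intro sum.cong refl)
    apply (simp add: algebra_simps)
    done
  also have "\<dots> = Yc d r c (\<lambda>l k. if l = j then mat_vec nj U (z l k) else z l k) i"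
    unfolding Yc_def outer_def
    apply (intro sum.cong refl)
    apply (subst rem)
    apply simp
    done
  finally show "mode_prod (Yc d r c z) j nj U i = Yc d r c (\<lambda>l k. if l = j then mat_vec nj U (z l k) else z l k) i" .
qed

lemma modes_prod_Yc:
  "j \<le> d \<Longrightarrow> modes_prod (Yc d r c y) n A j =
     Yc d r c (\<lambda>l k. if l < j then mat_vec (n l) (A l) (y l k) else y l k)"
proof (induction j)
  case 0
  then show ?case by simp
next
  case (Suc j)
  then have "modes_prod (Yc d r c y) n A (Suc j) = mode_prod (Yc d r c (\<lambda>l k. if l < j then mat_vec (n l) (A l) (y l k) else y l k)) j (n j) (A j)"
    by simp
  also have "\<dots> = Yc d r c (\<lambda>l k. if l < Suc j then mat_vec (n l) (A l) (y l k) else y l k)"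
    apply (subst mode_prod_Yc)
    using Suc.prems apply simp
    apply (rule arg_cong[where f="Yc d r c"])
    apply (auto simp: fun_eq_iff)
    done
  finally show ?case .
qed

lemma tnorm_Yc:
  "complex_of_real (tnorm_sq M d (Yc d r c z)) =
    (\<Sum>k<r. \<Sum>h<r. c k * cnj (c h) * (\<Prod>l<d. vinner (M l) (z l k) (z l h)))"
proof -
  have "complex_of_real (tnorm_sq M d (Yc d r c z)) =
     (\<Sum>i\<in>tidx M d. \<Sum>k<r. \<Sum>h<r. c k * cnj (c h) * (\<Prod>l<d. z l k (i l) * cnj (z l h (i l))))"
    unfolding tnorm_sq_def of_real_sum complex_norm_square
    apply (intro sum.cong refl)
    apply (simp add: Yc_def outer_def cnj_sum cnj_prod sum_product prod.distrib)
    apply (intro sum.cong refl)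
    apply (simp add: algebra_simps)
    done
  also have "\<dots> = (\<Sum>k<r. \<Sum>h<r. c k * cnj (c h) * (\<Sum>i\<in>tidx M d. (\<Prod>l<d. z l k (i l) * cnj (z l h (i l)))))"
  proof -
    have "\<And>g. (\<Sum>i\<in>tidx M d. \<Sum>k<r. \<Sum>h<r. g i k h) = (\<Sum>k<r. \<Sum>h<r. \<Sum>i\<in>tidx M d. g i k h)"
      by (subst sum.swap, rule sum.cong, simp, rule sum.swap)
    then show ?thesis by (simp add: sum_distrib_left)
  qed
  also have "\<dots> = (\<Sum>k<r. \<Sum>h<r. c k * cnj (c h) * (\<Prod>l<d. vinner (M l) (z l k) (z l h)))"
    unfolding vinner_def tidx_def
    by (subst prod_sum_PiE) auto
  finally show ?thesis .
qed



lemma vnorm_sq_complex: "complex_of_real (vnorm_sq N w) = (\<Sum>i<N. w i * cnj (w i))"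
  unfolding vnorm_sq_def of_real_sum complex_norm_square by simp

lemma polar_pt: "(a::complex) * cnj b = (1/4) * ((a + b) * cnj (a + b) + \<i> * ((a + \<i> * b) * cnj (a + \<i> * b))
      + (\<i> ^ 2) * ((a + \<i>^2 * b) * cnj (a + \<i>^2 * b)) + (\<i> ^ 3) * ((a + \<i>^3 * b) * cnj (a + \<i>^3 * b)))"
  by (simp add: algebra_simps power2_eq_square power3_eq_cube)

lemma polar: "vinner N u v = (1/4) * (\<Sum>p<4. \<i>^p * complex_of_real (vnorm_sq N (\<lambda>i. u i + \<i>^p * v i)))"
proof -
  have "vinner N u v = (\<Sum>i<N. (1/4) * (\<Sum>p<4. \<i>^p * ((u i + \<i>^p * v i) * cnj (u i + \<i>^p * v i))))"
    unfolding vinner_def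
    apply (intro sum.cong refl)
    apply (subst polar_pt)
    apply (simp add: numeral_eq_Suc)
    done
  also have "\<dots> = (\<Sum>i<N. \<Sum>p<4. (1/4) * (\<i>^p * ((u i + \<i>^p * v i) * cnj (u i + \<i>^p * v i))))"
    by (simp add: sum_distrib_left)
  also have "\<dots> = (\<Sum>p<4. \<Sum>i<N. (1/4) * (\<i>^p * ((u i + \<i>^p * v i) * cnj (u i + \<i>^p * v i))))"
    by (rule sum.swap)
  also have "\<dots> = (1/4) * (\<Sum>p<4. \<i>^p * complex_of_real (vnorm_sq N (\<lambda>i. u i + \<i>^p * v i)))"
    unfolding vnorm_sq_complex by (simp add: sum_distrib_left)
  finally show ?thesis .
qed

lemma mat_vec_lin: "mat_vec n A (\<lambda>i. x i + t * w i) = (\<lambda>i. mat_vec n A x i + t * mat_vec n A w i)"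
  unfolding mat_vec_def by (auto simp: algebra_simps sum.distrib sum_distrib_left)

lemma cmod_add_sq: "(cmod (a + b))^2 \<le> 2 * (cmod a)^2 + 2 * (cmod b)^2"
proof -
  have "cmod (a+b) \<le> cmod a + cmod b" by (rule norm_triangle_ineq)
  then have "(cmod (a+b))^2 \<le> (cmod a + cmod b)^2" by (simp add: power_mono)
  also have "\<dots> \<le> 2 * (cmod a)^2 + 2 * (cmod b)^2"
    using zero_le_power2[of "cmod a - cmod b"] by (simp add: power2_eq_square algebra_simps)
  finally show ?thesis .
qed

lemma vnorm_comb_le:
  assumes "cmod t = 1" "vnorm_sq n x = 1" "vnorm_sq n w = 1"
  shows "vnorm_sq n (\<lambda>i. x i + t * w i) \<le> 4"
proof -
  have "vnorm_sq n (\<lambda>i. x i + t * w i) \<le> (\<Sum>i<n. 2 * (cmod (x i))^2 + 2 * (cmod (w i))^2)"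
    unfolding vnorm_sq_def
    apply (rule sum_mono)
    using cmod_add_sq[of "x _" "t * w _"] assms(1) by (simp add: norm_mult)
  also have "\<dots> = 2 * vnorm_sq n x + 2 * vnorm_sq n w"
    unfolding vnorm_sq_def by (simp add: sum.distrib sum_distrib_left)
  finally show ?thesis using assms by simp
qed

lemma JL_inner:
  assumes JL: "is_JL_embedding e m n A S"
    and inS: "\<And>p. p < 4 \<Longrightarrow> (\<lambda>i. x i + \<i>^p * w i) \<in> S"
    and nx: "vnorm_sq n x = 1" and nw: "vnorm_sq n w = 1"
  shows "cmod (vinner m (mat_vec n A x) (mat_vec n A w) - vinner n x w) \<le> 4 * e"
proof -
  define F where "F p = complex_of_real (vnorm_sq m (\<lambda>i. mat_vec n A x i + \<i>^p * mat_vec n A w i))" for p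
  define G where "G p = complex_of_real (vnorm_sq n (\<lambda>i. x i + \<i>^p * w i))" for p
  have each: "cmod (\<i>^p * F p - \<i>^p * G p) \<le> 4 * e" if p4: "p < 4" for p
  proof -
    define V where "V = vnorm_sq n (\<lambda>i. x i + \<i>^p * w i)"
    obtain ee where ee: "-e < ee" "ee < e"
      "vnorm_sq m (mat_vec n A (\<lambda>i. x i + \<i>^p * w i)) = (1 + ee) * V"
      using JL inS[OF p4] unfolding is_JL_embedding_def V_def by blast
    have le4: "V \<le> 4" unfolding V_def
      by (rule vnorm_comb_le) (auto simp: nx nw norm_power)
    have ge0: "V \<ge> 0"
      unfolding vnorm_sq_def V_def by (simp add: sum_nonneg)
    have FG: "F p - G p = complex_of_real (ee * V)"
      unfolding F_def G_def using ee(3) unfolding mat_vec_lin V_def[symmetric]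
      by (simp add: algebra_simps)
    have "\<i>^p * F p - \<i>^p * G p = \<i>^p * (F p - G p)"
      by (simp only: right_diff_distrib)
    then have "cmod (\<i>^p * F p - \<i>^p * G p) = \<bar>ee\<bar> * V"
      unfolding FG by (simp only: norm_mult norm_power norm_ii power_one norm_of_real mult_1 abs_mult abs_of_nonneg[OF ge0])
    also have "\<dots> \<le> e * 4"
      using ee le4 ge0 by (intro mult_mono) auto
    finally show ?thesis by simp
  qed
  have eq: "vinner m (mat_vec n A x) (mat_vec n A w) - vinner n x w =
     (1/4) * (\<Sum>p<4. \<i>^p * F p - \<i>^p * G p)"
    unfolding polar[of m] polar[of n] F_def G_def sum_subtractf right_diff_distrib ..
  then have "cmod (vinner m (mat_vec n A x) (mat_vec n A w) - vinner n x w) =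
      (1/4) * cmod (\<Sum>p<4. \<i>^p * F p - \<i>^p * G p)"
    unfolding eq norm_mult by simp
  also have "\<dots> \<le> (1/4) * (\<Sum>p<4. cmod (\<i>^p * F p - \<i>^p * G p))"
    by (intro mult_left_mono norm_sum) auto
  also have "\<dots> \<le> (1/4) * (\<Sum>p<(4::nat). 4 * e)"
    by (intro mult_left_mono sum_mono each) auto
  finally show ?thesis by simp
qed



lemma prod_diff_bound:
  fixes a b :: "nat \<Rightarrow> complex"
  assumes "\<And>l. l < d \<Longrightarrow> cmod (b l) \<le> \<beta>" "\<And>l. l < d \<Longrightarrow> cmod (a l - b l) \<le> \<delta>"
    "0 \<le> \<beta>" "0 \<le> \<delta>"
  shows "cmod ((\<Prod>l<d. a l) - (\<Prod>l<d. b l)) \<le> (\<beta> + \<delta>)^d - \<beta>^d"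
  using assms(1,2)
proof (induction d)
  case 0
  then show ?case by simp
next
  case (Suc d)
  have IH: "cmod ((\<Prod>l<d. a l) - (\<Prod>l<d. b l)) \<le> (\<beta> + \<delta>)^d - \<beta>^d"
    using Suc by auto
  have ad: "cmod (a d) \<le> \<beta> + \<delta>"
    using Suc.prems[of d] norm_triangle_ineq[of "a d - b d" "b d"] by simp
  have pb: "cmod (\<Prod>l<d. b l) \<le> \<beta>^d"
  proof -
    have "(\<Prod>l<d. cmod (b l)) \<le> (\<Prod>l<d. \<beta>)"
      using Suc.prems(1) by (intro prod_mono) auto
    then show ?thesis by (simp add: prod_norm[symmetric])
  qed
  have "(\<Prod>l<Suc d. a l) - (\<Prod>l<Suc d. b l) =
      a d * ((\<Prod>l<d. a l) - (\<Prod>l<d. b l)) + (a d - b d) * (\<Prod>l<d. b l)"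
    by (simp add: algebra_simps)
  then have "cmod ((\<Prod>l<Suc d. a l) - (\<Prod>l<Suc d. b l)) \<le>
      cmod (a d) * cmod ((\<Prod>l<d. a l) - (\<Prod>l<d. b l)) + cmod (a d - b d) * cmod (\<Prod>l<d. b l)"
    by (metis norm_mult norm_triangle_ineq)
  also have "\<dots> \<le> (\<beta> + \<delta>) * ((\<beta> + \<delta>)^d - \<beta>^d) + \<delta> * \<beta>^d"
    using ad IH pb Suc.prems(2)[of d] assms(3,4) by (intro add_mono mult_mono) auto
  also have "\<dots> = (\<beta> + \<delta>)^Suc d - \<beta>^Suc d"
    by (simp add: algebra_simps)
  finally show ?case .
qed

lemma pow_diff_le:
  fixes x y :: real
  assumes "0 \<le> y" "y \<le> x"
  shows "x^Suc k - y^Suc k \<le> real (Suc k) * (x - y) * x^k"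
proof (induction k)
  case 0
  then show ?case by simp
next
  case (Suc k)
  have "x^Suc (Suc k) - y^Suc (Suc k) = x * (x^Suc k - y^Suc k) + (x - y) * y^Suc k"
    by (simp add: algebra_simps)
  also have "\<dots> \<le> x * (real (Suc k) * (x - y) * x^k) + (x - y) * x^Suc k"
    using Suc assms by (intro add_mono mult_left_mono power_mono) auto
  also have "\<dots> = real (Suc (Suc k)) * (x - y) * x^Suc k"
    by (simp add: algebra_simps)
  finally show ?case .
qed

lemma sum_abs_prod_le:
  fixes f :: "nat \<Rightarrow> real"
  shows "(\<Sum>k<r. \<Sum>h<r. \<bar>f k\<bar> * \<bar>f h\<bar>) \<le> real r * (\<Sum>k<r. (f k)^2)"
proof -
  have "(\<Sum>k<r. \<Sum>h<r. \<bar>f k\<bar> * \<bar>f h\<bar>) \<le> (\<Sum>k<r. \<Sum>h<r. ((f k)^2 + (f h)^2) / 2)"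
  proof (intro sum_mono)
    fix k h
    show "\<bar>f k\<bar> * \<bar>f h\<bar> \<le> ((f k)^2 + (f h)^2) / 2"
      using zero_le_power2[of "\<bar>f k\<bar> - \<bar>f h\<bar>"] by (simp add: power2_eq_square algebra_simps)
  qed
  also have "\<dots> = real r * (\<Sum>k<r. (f k)^2)"
    by (simp add: sum.distrib add_divide_distrib sum_divide_distrib[symmetric] sum_distrib_left[symmetric])
  finally show ?thesis .
qed

lemma sum_delta_mult:
  fixes f :: "nat \<Rightarrow> real"
  assumes "k < r"
  shows "(\<Sum>h<r. f h * (if k = h then a else 0)) = f k * a"
proof -
  have "(\<Sum>h<r. f h * (if k = h then a else 0)) = (\<Sum>h<r. if k = h then f k * a else 0)"
    by (intro sum.cong) auto
  then show ?thesis using assms by simp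
qed

lemma quad_bound:
  fixes c :: "nat \<Rightarrow> complex" and X :: "nat \<Rightarrow> nat \<Rightarrow> complex"
  assumes "\<And>k. k < r \<Longrightarrow> cmod (X k k) \<le> a"
    and "\<And>k h. k < r \<Longrightarrow> h < r \<Longrightarrow> k \<noteq> h \<Longrightarrow> cmod (X k h) \<le> b"
    and "0 \<le> a" "0 \<le> b"
  shows "cmod (\<Sum>k<r. \<Sum>h<r. c k * cnj (c h) * X k h) \<le> (a + b * real r) * (\<Sum>k<r. (cmod (c k))^2)"
proof -
  have "cmod (\<Sum>k<r. \<Sum>h<r. c k * cnj (c h) * X k h) \<le> (\<Sum>k<r. \<Sum>h<r. cmod (c k * cnj (c h) * X k h))"
    by (rule order.trans[OF norm_sum sum_mono[OF norm_sum]])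
  also have "\<dots> \<le> (\<Sum>k<r. \<Sum>h<r. cmod (c k) * cmod (c h) * ((if k = h then a else 0) + b))"
  proof (intro sum_mono)
    fix k h assume "k \<in> {..<r}" "h \<in> {..<r}"
    then have "cmod (X k h) \<le> (if k = h then a else 0) + b"
      using assms(1)[of k] assms(2)[of k h] assms(4) by auto
    then show "cmod (c k * cnj (c h) * X k h) \<le> cmod (c k) * cmod (c h) * ((if k = h then a else 0) + b)"
      by (simp add: norm_mult mult_left_mono)
  qed
  also have "\<dots> = (\<Sum>k<r. \<Sum>h<r. (if k = h then a * (cmod (c k) * cmod (c h)) else 0)) + b * (\<Sum>k<r. \<Sum>h<r. \<bar>cmod (c k)\<bar> * \<bar>cmod (c h)\<bar>)"
  proof -
    have "\<And>k h. cmod (c k) * cmod (c h) * ((if k = h then a else 0) + b) =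
       (if k = h then a * (cmod (c k) * cmod (c h)) else 0) + b * (\<bar>cmod (c k)\<bar> * \<bar>cmod (c h)\<bar>)"
      by (simp add: algebra_simps)
    then show ?thesis by (simp only: sum.distrib sum_distrib_left)
  qed
  also have "\<dots> = a * (\<Sum>k<r. (cmod (c k))^2) + b * (\<Sum>k<r. \<Sum>h<r. \<bar>cmod (c k)\<bar> * \<bar>cmod (c h)\<bar>)"
  proof -
    have "(\<Sum>k<r. \<Sum>h<r. (if k = h then a * (cmod (c k) * cmod (c h)) else 0)) = (\<Sum>k<r. a * (cmod (c k))^2)"
    proof (intro sum.cong refl)
      fix k assume "k \<in> {..<r}"
      then show "(\<Sum>h<r. (if k = h then a * (cmod (c k) * cmod (c h)) else 0)) = a * (cmod (c k))^2"
        by (simp add: power2_eq_square)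
    qed
    then show ?thesis by (simp add: sum_distrib_left)
  qed
  also have "\<dots> \<le> a * (\<Sum>k<r. (cmod (c k))^2) + b * (real r * (\<Sum>k<r. (cmod (c k))^2))"
    using sum_abs_prod_le[of "\<lambda>k. cmod (c k)" r] assms(4) by (intro add_left_mono mult_left_mono) auto
  finally show ?thesis by (simp add: algebra_simps)
qed



lemma one_plus_pow_exp:
  fixes x :: real assumes "0 \<le> x"
  shows "(1 + x)^k \<le> exp (real k * x)"
proof -
  have "(1 + x)^k \<le> (exp x)^k"
    using assms by (intro power_mono) (auto simp: exp_ge_add_one_self add.commute)
  then show ?thesis by (simp add: exp_of_nat_mult)
qed

lemma numeric:
  fixes \<epsilon> \<mu> \<rho> \<delta> :: real and d r k :: nat
  assumes d: "d = Suc k" "1 \<le> k" and r: "1 \<le> r"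
    and e: "0 < \<epsilon>" "\<epsilon> \<le> 1" and mu: "0 \<le> \<mu>" "\<mu>^k < 1 / (2 * real r)"
    and rho: "1 \<le> \<rho>" "\<rho>^d = real r" and dl: "\<delta> = \<epsilon> / (9 * real d * \<rho>)"
  shows "((1 + \<delta>)^d - 1) + ((\<mu> + \<delta>)^d - \<mu>^d) * real r \<le> \<epsilon> / 2"
proof -
  define t where "t = real d * \<delta>"
  have dpos: "real d > 0" using d by simp
  have t_eq: "t = \<epsilon> / (9 * \<rho>)" unfolding t_def dl using dpos by (simp add: field_simps)
  have t0: "0 < t" unfolding t_eq using e rho by simp
  have tle: "t \<le> \<epsilon> / 9" unfolding t_eq using e rho
    by (simp add: field_simps)
  have d0: "0 < \<delta>" using t0 dpos unfolding t_def by (simp add: zero_less_mult_iff)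
  have kd: "real k * \<delta> \<le> t" unfolding t_def using d d0 by simp
  have exp_t: "exp t \<le> 3"
  proof -
    have "exp t \<le> exp 1" using tle e by simp
    then show ?thesis using exp_le by linarith
  qed
  have D1: "(1 + \<delta>)^d - 1 \<le> real d * \<delta> * (1 + \<delta>)^k"
    using pow_diff_le[of 1 "1 + \<delta>" k] d0 d by simp
  have D2: "(1 + \<delta>)^k \<le> 3"
  proof -
    have "exp (real k * \<delta>) \<le> exp t" using kd by simp
    then show ?thesis using one_plus_pow_exp[of \<delta> k] d0 exp_t by linarith
  qed
  have Dle: "(1 + \<delta>)^d - 1 \<le> \<epsilon> / 3"
  proof -
    have "real d * \<delta> * (1 + \<delta>)^k \<le> t * 3"
      unfolding t_def using D2 d0 dpos by (intro mult_left_mono) auto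
    then show ?thesis using D1 tle by linarith
  qed
  have O1: "(\<mu> + \<delta>)^d - \<mu>^d \<le> t * (\<mu> + \<delta>)^k"
    using pow_diff_le[of \<mu> "\<mu> + \<delta>" k] d0 mu d unfolding t_def by simp
  have rpos: "0 < real r" using r by simp
  have Ole: "((\<mu> + \<delta>)^d - \<mu>^d) * real r \<le> \<epsilon> / 6"
  proof (cases "t \<le> \<mu>")
    case True
    then have mpos: "0 < \<mu>" using t0 by simp
    have "\<mu> + \<delta> = \<mu> * (1 + \<delta> / \<mu>)" using mpos by (simp add: field_simps)
    then have "(\<mu> + \<delta>)^k = \<mu>^k * (1 + \<delta>/\<mu>)^k" by (simp add: power_mult_distrib)
    also have "\<dots> \<le> \<mu>^k * 3"
    proof -
      have "(1 + \<delta>/\<mu>)^k \<le> exp (real k * (\<delta> / \<mu>))"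
        using d0 mpos by (intro one_plus_pow_exp) simp
      also have "real k * (\<delta> / \<mu>) \<le> 1"
      proof -
        have "real k * \<delta> \<le> t" by (rule kd)
        then have "real k * \<delta> \<le> \<mu>" using True by linarith
        then show ?thesis using mpos by (simp add: field_simps)
      qed
      then have "exp (real k * (\<delta> / \<mu>)) \<le> exp 1" by simp
      then have "exp (real k * (\<delta> / \<mu>)) \<le> 3" using exp_le by linarith
      finally show ?thesis using mpos by (intro mult_left_mono) auto
    qed
    finally have "(\<mu> + \<delta>)^k \<le> \<mu>^k * 3" .
    then have "(\<mu> + \<delta>)^k * real r \<le> 3 / 2"
    proof -
      have "\<mu>^k * real r < 1/2" using mu(2) rpos by (simp add: field_simps)
      then have "\<mu>^k * 3 * real r \<le> 3/2" by (simp add: algebra_simps)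
      moreover have "(\<mu> + \<delta>)^k * real r \<le> \<mu>^k * 3 * real r"
        using \<open>(\<mu> + \<delta>)^k \<le> \<mu>^k * 3\<close> rpos by (intro mult_right_mono) auto
      ultimately show ?thesis by linarith
    qed
    then have "t * (\<mu> + \<delta>)^k * real r \<le> t * (3/2)"
      using t0 by (simp add: mult.assoc)
    moreover have "((\<mu> + \<delta>)^d - \<mu>^d) * real r \<le> t * (\<mu> + \<delta>)^k * real r"
      using O1 rpos by (intro mult_right_mono) auto
    ultimately show ?thesis using tle by linarith
  next
    case False
    have "\<delta> \<le> t" unfolding t_def using d0 d by simp
    then have "\<mu> + \<delta> \<le> 2 * t" using False by linarith
    then have "(\<mu> + \<delta>)^k \<le> (2 * t)^k" using mu d0 by (intro power_mono) auto
    then have "t * (\<mu> + \<delta>)^k * real r \<le> t * (2 * t)^k * real r"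
      using t0 rpos by (intro mult_right_mono mult_left_mono) auto
    also have "\<dots> = 2^k * (t^d * \<rho>^d)"
      using rho d by (simp add: power_mult_distrib algebra_simps)
    also have "t^d * \<rho>^d = (\<epsilon> / 9)^d"
    proof -
      have "\<epsilon> / (9 * \<rho>) * \<rho> = \<epsilon> / 9" using rho by simp
      then show ?thesis unfolding t_eq by (simp only: power_mult_distrib[symmetric])
    qed
    also have "2^k * (\<epsilon> / 9)^d = (2 * \<epsilon> / 9)^k * (\<epsilon> / 9)"
      using d by (simp add: power_mult_distrib power_divide field_simps)
    also have "\<dots> \<le> 1 * (\<epsilon> / 9)"
      using e by (intro mult_right_mono power_le_one) auto
    finally have "t * (\<mu> + \<delta>)^k * real r \<le> 1 * (\<epsilon> / 9)" .
    moreover have "((\<mu> + \<delta>)^d - \<mu>^d) * real r \<le> t * (\<mu> + \<delta>)^k * real r"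
      using O1 rpos by (intro mult_right_mono) auto
    ultimately show ?thesis using e by linarith
  qed
  show ?thesis using Dle Ole by linarith
qed



lemma vinner_self: "vinner N x x = complex_of_real (vnorm_sq N x)"
  unfolding vinner_def vnorm_sq_complex ..

lemma quad_diff:
  "(\<Sum>k<r. \<Sum>h<r. c k * cnj (c h) * X k h) - (\<Sum>k<r. \<Sum>h<r. c k * cnj (c h) * Y k h)
   = (\<Sum>k<r. \<Sum>h<r. c k * cnj (c h) * (X k h - Y k h))"
  by (simp add: sum_subtractf right_diff_distrib)

lemma quad_id:
  fixes c :: "nat \<Rightarrow> complex"
  shows "(\<Sum>k<r. \<Sum>h<r. c k * cnj (c h) * (if k = h then 1 else 0)) = complex_of_real (\<Sum>k<r. (cmod (c k))^2)"
proof -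
  have "(\<Sum>k<r. \<Sum>h<r. c k * cnj (c h) * (if k = h then 1 else 0)) = (\<Sum>k<r. c k * cnj (c k))"
  proof (intro sum.cong refl)
    fix k assume "k \<in> {..<r}"
    have "(\<Sum>h<r. c k * cnj (c h) * (if k = h then 1 else 0)) = (\<Sum>h<r. if k = h then c k * cnj (c k) else 0)"
      by (intro sum.cong) auto
    then show "(\<Sum>h<r. c k * cnj (c h) * (if k = h then 1 else 0)) = c k * cnj (c k)"
      using \<open>k \<in> {..<r}\<close> by (simp add: sum.delta sum.delta')
  qed
  then show ?thesis unfolding of_real_sum complex_norm_square by simp
qed

lemma coherence_facts:
  shows "0 \<le> coherence n d r y"
    and "\<And>l k h. l < d \<Longrightarrow> k < r \<Longrightarrow> h < r \<Longrightarrow> k \<noteq> h \<Longrightarrow>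
          cmod (vinner (n l) (y l k) (y l h)) \<le> coherence n d r y"
proof -
  let ?S = "{cmod (vinner (n l) (y l k) (y l h)) | l k h. l < d \<and> k < r \<and> h < r \<and> k \<noteq> h}"
  have "?S \<subseteq> (\<lambda>(l, k, h). cmod (vinner (n l) (y l k) (y l h))) ` ({..<d} \<times> {..<r} \<times> {..<r})"
    by (force simp: image_iff)
  then have fin: "finite ({0} \<union> ?S)"
    by (meson finite_Un finite_SigmaI finite_imageI finite_insert finite_lessThan finite_subset finite.emptyI)
  show "0 \<le> coherence n d r y" unfolding coherence_def
    by (rule Max_ge[OF fin]) simp
  fix l k h assume "l < d" "k < r" "h < r" "k \<noteq> h"
  then show "cmod (vinner (n l) (y l k) (y l h)) \<le> coherence n d r y" unfolding coherence_def
    by (intro Max_ge[OF fin]) blast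
qed

lemma det_main:
  fixes \<epsilon> \<delta> :: real
  assumes d: "2 \<le> d" and r: "1 \<le> r" and e: "0 < \<epsilon>" "\<epsilon> \<le> 1"
    and unit: "\<forall>l<d. \<forall>k<r. vnorm_sq (n l) (y l k) = 1"
    and coh: "coherence n d r y ^ (d - 1) < 1 / (2 * real r)"
    and inn: "\<forall>l<d. \<forall>k<r. \<forall>h<r. cmod (vinner (m l) (mat_vec (n l) (A l) (y l k)) (mat_vec (n l) (A l) (y l h))
                 - vinner (n l) (y l k) (y l h)) \<le> \<delta>"
    and dl: "\<delta> = \<epsilon> / (9 * real d * (real r powr (1 / real d)))"
  shows "\<bar>tnorm_sq m d (modes_prod (Yc d r c y) n A d) - tnorm_sq n d (Yc d r c y)\<bar>
           \<le> \<epsilon> * tnorm_sq n d (Yc d r c y)"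
proof -
  obtain k where dk: "d = Suc k" "1 \<le> k" using d by (cases d) auto
  define \<mu> where "\<mu> = coherence n d r y"
  have mu0: "0 \<le> \<mu>" unfolding \<mu>_def by (rule coherence_facts)
  have muoff: "\<And>l k h. l < d \<Longrightarrow> k < r \<Longrightarrow> h < r \<Longrightarrow> k \<noteq> h \<Longrightarrow>
          cmod (vinner (n l) (y l k) (y l h)) \<le> \<mu>" unfolding \<mu>_def by (rule coherence_facts)
  have rpos: "0 < real r" using r by simp
  have muk: "\<mu>^k < 1 / (2 * real r)" using coh dk unfolding \<mu>_def by simp
  have mu1: "\<mu> \<le> 1"
  proof (rule ccontr)
    assume "\<not> \<mu> \<le> 1"
    then have "1 \<le> \<mu>^k" by (intro one_le_power) auto
    moreover have "1 / (2 * real r) \<le> 1/2" using r by (simp add: field_simps)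
    ultimately show False using muk by linarith
  qed
  define \<rho> where "\<rho> = real r powr (1 / real d)"
  have rho1: "1 \<le> \<rho>" unfolding \<rho>_def using r by (intro ge_one_powr_ge_zero) auto
  have rhod: "\<rho>^d = real r"
    unfolding \<rho>_def using rpos d by (simp add: powr_power)
  have num: "((1 + \<delta>)^d - 1) + ((\<mu> + \<delta>)^d - \<mu>^d) * real r \<le> \<epsilon> / 2"
    by (rule numeric[OF dk r e mu0 muk rho1 rhod]) (simp add: dl \<rho>_def)
  have del0: "0 \<le> \<delta>" unfolding dl using e rho1 \<rho>_def d by simp
  define PA where "PA k h = (\<Prod>l<d. vinner (m l) (mat_vec (n l) (A l) (y l k)) (mat_vec (n l) (A l) (y l h)))" for k h
  define P where "P k h = (\<Prod>l<d. vinner (n l) (y l k) (y l h))" for k h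
  define N where "N = (\<Sum>k<r. (cmod (c k))^2)"
  have N0: "0 \<le> N" unfolding N_def by (simp add: sum_nonneg)
  define TA where "TA = tnorm_sq m d (modes_prod (Yc d r c y) n A d)"
  define T where "T = tnorm_sq n d (Yc d r c y)"
  have TA_eq: "complex_of_real TA = (\<Sum>k<r. \<Sum>h<r. c k * cnj (c h) * PA k h)"
    unfolding TA_def modes_prod_Yc[OF order.refl] tnorm_Yc PA_def
    by (intro sum.cong refl arg_cong2[where f="(*)"] prod.cong) auto
  have T_eq: "complex_of_real T = (\<Sum>k<r. \<Sum>h<r. c k * cnj (c h) * P k h)"
    unfolding T_def tnorm_Yc P_def ..
  have Pdiag: "P k k = 1" if "k < r" for k
    unfolding P_def using unit that by (simp add: vinner_self)
  have err: "\<bar>TA - T\<bar> \<le> (((1 + \<delta>)^d - 1) + ((\<mu> + \<delta>)^d - \<mu>^d) * real r) * N"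
  proof -
    have "\<bar>TA - T\<bar> = cmod (complex_of_real TA - complex_of_real T)"
      by (simp flip: of_real_diff)
    also have "\<dots> = cmod (\<Sum>k<r. \<Sum>h<r. c k * cnj (c h) * (PA k h - P k h))"
      unfolding TA_eq T_eq quad_diff ..
    also have "\<dots> \<le> (((1 + \<delta>)^d - 1) + ((\<mu> + \<delta>)^d - \<mu>^d) * real r) * N"
      unfolding N_def
    proof (rule quad_bound)
      fix k assume "k < r"
      have b1: "\<And>l. l < d \<Longrightarrow> cmod (vinner (n l) (y l k) (y l k)) \<le> 1"
        using unit \<open>k < r\<close> by (simp add: vinner_self)
      have "cmod (PA k k - P k k) \<le> (1 + \<delta>)^d - 1^d"
        unfolding PA_def P_def
        by (rule prod_diff_bound) (use b1 inn \<open>k < r\<close> del0 in auto)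
      then show "cmod (PA k k - P k k) \<le> (1 + \<delta>)^d - 1" by simp
    next
      fix k h assume "k < r" "h < r" "k \<noteq> h"
      show "cmod (PA k h - P k h) \<le> (\<mu> + \<delta>)^d - \<mu>^d"
        unfolding PA_def P_def
        using prod_diff_bound[of d "\<lambda>l. vinner (n l) (y l k) (y l h)" \<mu>
             "\<lambda>l. vinner (m l) (mat_vec (n l) (A l) (y l k)) (mat_vec (n l) (A l) (y l h))" \<delta>]
          muoff inn \<open>k < r\<close> \<open>h < r\<close> \<open>k \<noteq> h\<close> del0 mu0 by simp
    next
      show "0 \<le> (1 + \<delta>)^d - 1" using del0 by (simp add: one_le_power)
    next
      show "0 \<le> (\<mu> + \<delta>)^d - \<mu>^d" using del0 mu0 by (simp add: power_mono)
    qed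
    finally show ?thesis .
  qed
  have low: "\<bar>T - N\<bar> \<le> (0 + \<mu>^d * real r) * N"
  proof -
    have "\<bar>T - N\<bar> = cmod (complex_of_real T - complex_of_real N)"
      by (simp flip: of_real_diff)
    also have "\<dots> = cmod (\<Sum>k<r. \<Sum>h<r. c k * cnj (c h) * (P k h - (if k = h then 1 else 0)))"
      unfolding T_eq N_def quad_id[symmetric] quad_diff ..
    also have "\<dots> \<le> (0 + \<mu>^d * real r) * N"
      unfolding N_def
    proof (rule quad_bound)
      fix k assume "k < r"
      then show "cmod (P k k - (if k = k then 1 else 0)) \<le> 0" by (simp add: Pdiag)
    next
      fix k h assume kh: "k < r" "h < r" "k \<noteq> h"
      have "cmod (P k h) = (\<Prod>l<d. cmod (vinner (n l) (y l k) (y l h)))"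
        unfolding P_def by (simp add: prod_norm)
      also have "\<dots> \<le> (\<Prod>l<d. \<mu>)"
        using muoff kh by (intro prod_mono) auto
      finally show "cmod (P k h - (if k = h then 1 else 0)) \<le> \<mu>^d" using kh by simp
    qed (use mu0 in auto)
    finally show ?thesis .
  qed
  have "\<mu>^d \<le> \<mu>^k" using dk mu0 mu1 by (simp add: mult_left_le_one_le)
  then have "\<mu>^d * real r \<le> 1/2"
  proof -
    have "\<mu>^k * real r < 1/2" using muk rpos by (simp add: field_simps)
    moreover have "\<mu>^d * real r \<le> \<mu>^k * real r" using \<open>\<mu>^d \<le> \<mu>^k\<close> rpos by (intro mult_right_mono) auto
    ultimately show ?thesis by linarith
  qed
  then have "\<mu>^d * real r * N \<le> N / 2" using N0 by (metis mult_right_mono times_divide_eq_left mult_1)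
  moreover have "-(\<mu>^d * real r * N) \<le> T - N" using low by (simp add: abs_le_iff)
  ultimately have TN: "N / 2 \<le> T" by linarith
  have "(((1 + \<delta>)^d - 1) + ((\<mu> + \<delta>)^d - \<mu>^d) * real r) * N \<le> \<epsilon> / 2 * N"
    using num N0 by (rule mult_right_mono)
  also have "\<dots> \<le> \<epsilon> * T" using TN e by (simp add: mult_left_mono)
  finally show ?thesis using err unfolding TA_def T_def by linarith
qed


lemma fpps:
  assumes "\<And>j. prob_space (M j)"
  shows "finite_product_prob_space M {..<(d::nat)}"
proof -
  have "product_prob_space M" by (rule product_prob_spaceI) (rule assms)
  then show ?thesis
    by (simp add: finite_product_prob_space_def finite_product_sigma_finite_def finite_product_sigma_finite_axioms_def product_prob_space_def)
qed


lemma modes_prod_zero: "modes_prod (\<lambda>i. 0) n A j = (\<lambda>i. 0)"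
  by (induction j) (auto simp: mode_prod_def)

lemma main_lemma:
  fixes \<epsilon> \<eta> C :: real and d r :: nat and n m :: "nat \<Rightarrow> nat" and y :: "nat \<Rightarrow> nat \<Rightarrow> cvec"
    and D :: "nat \<Rightarrow> nat \<Rightarrow> cmat measure"
  assumes C: "C > 0" and e: "0 < \<epsilon>" "\<epsilon> < 1/2" and et: "0 < \<eta>" "\<eta> < 1/2" and d: "2 \<le> d"
    and unit: "\<forall>l<d. \<forall>k<r. vnorm_sq (n l) (y l k) = 1"
    and coh: "coherence n d r y ^ (d - 1) < 1 / (2 * real r)"
    and opt: "eta_optimal_with C (\<eta> / real d) D"
    and mn: "\<forall>j<d. m j < n j"
    and mj: "\<forall>j<d. real (m j) \<ge> (2592 * C) * real r powr (2 / real d) * (real d)\<^sup>2 / \<epsilon>\<^sup>2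
                              * ln (2 * (real r)\<^sup>2 * real d / \<eta>)"
  shows "holds_with_prob_ge (PiM {..<d} (\<lambda>j. D (m j) (n j)))
           (\<lambda>A. \<forall>c::nat \<Rightarrow> complex.
              let Y = (\<lambda>i. \<Sum>k<r. c k * outer d (\<lambda>l. y l k) i) in
              \<bar>tnorm_sq m d (modes_prod Y n A d) - tnorm_sq n d Y\<bar> \<le> \<epsilon> * tnorm_sq n d Y)
           (1 - \<eta>)"
proof -
  have ps: "\<And>a b. prob_space (D a b)" using opt unfolding eta_optimal_with_def by blast
  interpret P: finite_product_prob_space "\<lambda>j. D (m j) (n j)" "{..<d}"
    by (rule fpps) (rule ps)
  show ?thesis
  proof (cases "r = 0")
    case True
    show ?thesis unfolding holds_with_prob_ge_def
    proof (intro bexI[of _ "space (PiM {..<d} (\<lambda>j. D (m j) (n j)))"] conjI)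
      show "space (PiM {..<d} (\<lambda>j. D (m j) (n j))) \<subseteq> {A \<in> space (PiM {..<d} (\<lambda>j. D (m j) (n j))).
           \<forall>c::nat \<Rightarrow> complex. let Y = (\<lambda>i. \<Sum>k<r. c k * outer d (\<lambda>l. y l k) i) in
              \<bar>tnorm_sq m d (modes_prod Y n A d) - tnorm_sq n d Y\<bar> \<le> \<epsilon> * tnorm_sq n d Y}"
        using True by (auto simp: Let_def modes_prod_zero tnorm_sq_def)
      show "1 - \<eta> \<le> measure (PiM {..<d} (\<lambda>j. D (m j) (n j))) (space (PiM {..<d} (\<lambda>j. D (m j) (n j))))"
      proof -
        have "prob_space (PiM {..<d} (\<lambda>j. D (m j) (n j)))" by (rule prob_space_PiM) (rule ps)
        then have "measure (PiM {..<d} (\<lambda>j. D (m j) (n j))) (space (PiM {..<d} (\<lambda>j. D (m j) (n j)))) = 1"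
          by (rule prob_space.prob_space)
        then show ?thesis using et by simp
      qed
    qed simp
  next
    case False
    then have r: "1 \<le> r" by simp
    have rpos: "0 < real r" using r by simp
    have dpos: "0 < real d" using d by simp
    define \<rho> where "\<rho> = real r powr (1 / real d)"
    have rho1: "1 \<le> \<rho>" unfolding \<rho>_def using r by (intro ge_one_powr_ge_zero) auto
    have rho2: "\<rho>^2 = real r powr (2 / real d)"
      unfolding \<rho>_def using rpos by (simp add: powr_power)
    define e' where "e' = \<epsilon> / (36 * real d * \<rho>)"
    have e'pos: "0 < e'" unfolding e'_def using e dpos rho1 by simp
    have e'1: "e' < 1"
    proof -
      have "1 * 1 \<le> real d * \<rho>" using d rho1 by (intro mult_mono) auto
      then have "36 * real d * \<rho> \<ge> 1" by linarith
      then show ?thesis unfolding e'_def using e by (simp add: field_simps)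
    qed
    define L where "L = ln (2 * (real r)\<^sup>2 * real d / \<eta>)"
    have argpos: "0 < 2 * (real r)\<^sup>2 * real d / \<eta>" using rpos dpos et by simp
    have expL: "exp L = 2 * (real r)\<^sup>2 * real d / \<eta>" unfolding L_def using argpos by simp
    have arg1: "1 \<le> 2 * (real r)\<^sup>2 * real d / \<eta>"
    proof -
      have "1 \<le> (real r)\<^sup>2" using r by simp
      then have "\<eta> \<le> 2 * (real r)\<^sup>2 * real d" using et d
      proof -
        have "1 \<le> real d" using d by simp
        then have "1 * 1 \<le> (real r)\<^sup>2 * real d" using \<open>1 \<le> (real r)\<^sup>2\<close> by (intro mult_mono) auto
        then show ?thesis using et by linarith
      qed
      then show ?thesis using et by simp
    qed
    have L0: "0 \<le> L" unfolding L_def using arg1 by simp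
    define S where "S l = (\<lambda>(k, h, p). \<lambda>i. y l k i + \<i>^p * y l h i) ` ({..<r} \<times> {..<r} \<times> {..<(4::nat)})" for l
    have Sfin: "finite (S l)" for l unfolding S_def by simp
    have Sne: "S l \<noteq> {}" for l
    proof -
      have "(0, 0, 0) \<in> {..<r} \<times> {..<r} \<times> {..<(4::nat)}" using r by auto
      then show ?thesis unfolding S_def by blast
    qed
    have Scard: "real (card (S l)) \<le> 4 * (real r)^2" for l
    proof -
      have "card (S l) \<le> card ({..<r} \<times> {..<r} \<times> {..<(4::nat)})" unfolding S_def by (rule card_image_le) simp
      also have "\<dots> = r * (r * 4)" by (simp add: card_cartesian_product)
      finally have "real (card (S l)) \<le> real (r * (r * 4))" by linarith
      then show ?thesis by (simp add: power2_eq_square algebra_simps)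
    qed
    have JLprob: "holds_with_prob_ge (D (m l) (n l)) (\<lambda>A. is_JL_embedding e' (m l) (n l) A (S l)) (1 - \<eta> / real d)"
      if l: "l < d" for l
    proof -
      have key: "2 * L \<le> e'\<^sup>2 * real (m l) / C"
      proof -
        have "e'\<^sup>2 * real (m l) \<ge> e'\<^sup>2 * ((2592 * C) * \<rho>^2 * (real d)\<^sup>2 / \<epsilon>\<^sup>2 * L)"
          using mj l rho2 unfolding L_def by (intro mult_left_mono) auto
        also have "e'\<^sup>2 * ((2592 * C) * \<rho>^2 * (real d)\<^sup>2 / \<epsilon>\<^sup>2 * L) = 2 * C * L"
          unfolding e'_def using e dpos rho1 by (simp add: field_simps power2_eq_square)
        finally show ?thesis using C by (simp add: field_simps)
      qed
      have "real (card (S l)) \<le> 4 * (real r)^2" by (rule Scard)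
      also have "\<dots> \<le> \<eta> / real d * (2 * (real r)\<^sup>2 * real d / \<eta>)^2"
      proof -
        have eq: "\<eta> / real d * (2 * (real r)\<^sup>2 * real d / \<eta>)^2 = 4 * (real r)^2 * ((real r)^2 * (real d / \<eta>))"
          using et dpos by (simp add: field_simps power2_eq_square)
        have q1: "1 \<le> (real r)^2 * (real d / \<eta>)"
        proof -
          have "1 \<le> (real r)^2" using r by simp
          moreover have "1 \<le> real d / \<eta>" using et d by (simp add: field_simps)
          ultimately have "1 * 1 \<le> (real r)^2 * (real d / \<eta>)" by (intro mult_mono) auto
          then show ?thesis by simp
        qed
        have "4 * (real r)^2 * 1 \<le> 4 * (real r)^2 * ((real r)^2 * (real d / \<eta>))"
          using q1 by (intro mult_left_mono) auto
        then show ?thesis unfolding eq by simp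
      qed
      also have "\<dots> = \<eta> / real d * exp (2 * L)"
      proof -
        have "exp (2 * L) = exp (L + L)" by simp
        also have "\<dots> = exp L * exp L" by (rule exp_add)
        finally have e2: "exp (2 * L) = (exp L)^2" by (simp only: power2_eq_square)
        show ?thesis by (simp only: e2 expL)
      qed
      also have "\<dots> \<le> \<eta> / real d * exp (e'\<^sup>2 * real (m l) / C)"
        using key et dpos by (intro mult_left_mono) auto
      finally have cardok: "real (card (S l)) \<le> \<eta> / real d * exp (e'\<^sup>2 * real (m l) / C)" .
      have "\<forall>\<epsilon> m n S. 0 < \<epsilon> \<and> \<epsilon> < 1 \<and> m < n \<and> S \<noteq> {} \<and> finite S \<and>
        real (card S) \<le> \<eta> / real d * exp (\<epsilon>\<^sup>2 * real m / C) \<longrightarrow>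
        holds_with_prob_ge (D m n) (\<lambda>A. is_JL_embedding \<epsilon> m n A S) (1 - \<eta> / real d)"
        using opt unfolding eta_optimal_with_def by (elim conjE)
      then have "0 < e' \<and> e' < 1 \<and> m l < n l \<and> S l \<noteq> {} \<and> finite (S l) \<and>
        real (card (S l)) \<le> \<eta> / real d * exp (e'\<^sup>2 * real (m l) / C) \<longrightarrow>
        holds_with_prob_ge (D (m l) (n l)) (\<lambda>A. is_JL_embedding e' (m l) (n l) A (S l)) (1 - \<eta> / real d)"
        by (elim allE)
      then show ?thesis
        using e'pos e'1 mn l Sne Sfin cardok by simp
    qed
    have "\<forall>l\<in>{..<d}. \<exists>E. E \<in> sets (D (m l) (n l)) \<and>
        E \<subseteq> {A \<in> space (D (m l) (n l)). is_JL_embedding e' (m l) (n l) A (S l)} \<and>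
        1 - \<eta> / real d \<le> measure (D (m l) (n l)) E"
    proof
      fix l assume "l \<in> {..<d}"
      then have "l < d" by simp
      from JLprob[OF this] show "\<exists>E. E \<in> sets (D (m l) (n l)) \<and>
        E \<subseteq> {A \<in> space (D (m l) (n l)). is_JL_embedding e' (m l) (n l) A (S l)} \<and>
        1 - \<eta> / real d \<le> measure (D (m l) (n l)) E"
        unfolding holds_with_prob_ge_def by (elim bexE conjE) (rule exI, intro conjI, assumption+)
    qed
    from bchoice[OF this] obtain E where E0: "\<forall>l\<in>{..<d}. E l \<in> sets (D (m l) (n l)) \<and>
        E l \<subseteq> {A \<in> space (D (m l) (n l)). is_JL_embedding e' (m l) (n l) A (S l)} \<and>
        1 - \<eta> / real d \<le> measure (D (m l) (n l)) (E l)" by (elim exE)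
    have E: "\<And>l. l < d \<Longrightarrow> E l \<in> sets (D (m l) (n l)) \<and>
        E l \<subseteq> {A \<in> space (D (m l) (n l)). is_JL_embedding e' (m l) (n l) A (S l)} \<and>
        1 - \<eta> / real d \<le> measure (D (m l) (n l)) (E l)"
      using E0 by simp
    show ?thesis unfolding holds_with_prob_ge_def
    proof (intro bexI[of _ "PiE {..<d} E"] conjI)
      show "PiE {..<d} E \<in> sets (PiM {..<d} (\<lambda>j. D (m j) (n j)))"
        using E by (intro sets_PiM_I_finite) auto
      have "measure (PiM {..<d} (\<lambda>j. D (m j) (n j))) (PiE {..<d} E) = (\<Prod>l<d. measure (D (m l) (n l)) (E l))"
        using E by (intro P.prob_times) auto
      also have "\<dots> \<ge> (\<Prod>l<d. 1 - \<eta> / real d)"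
        using E et dpos d by (intro prod_mono) (auto simp: field_simps)
      finally have "(1 - \<eta> / real d)^d \<le> measure (PiM {..<d} (\<lambda>j. D (m j) (n j))) (PiE {..<d} E)" by simp
      moreover have "1 + real d * (- \<eta> / real d) \<le> (1 + (- \<eta> / real d))^d"
        using et dpos d by (intro Bernoulli_inequality) (simp add: field_simps)
      ultimately show "1 - \<eta> \<le> measure (PiM {..<d} (\<lambda>j. D (m j) (n j))) (PiE {..<d} E)"
        using dpos by simp
      show "PiE {..<d} E \<subseteq> {A \<in> space (PiM {..<d} (\<lambda>j. D (m j) (n j))).
           \<forall>c::nat \<Rightarrow> complex. let Y = (\<lambda>i. \<Sum>k<r. c k * outer d (\<lambda>l. y l k) i) in
              \<bar>tnorm_sq m d (modes_prod Y n A d) - tnorm_sq n d Y\<bar> \<le> \<epsilon> * tnorm_sq n d Y}"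
      proof
        fix A assume A: "A \<in> PiE {..<d} E"
        have Asp: "A \<in> space (PiM {..<d} (\<lambda>j. D (m j) (n j)))"
          using A E unfolding space_PiM by (force simp: PiE_iff)
        have JL: "is_JL_embedding e' (m l) (n l) (A l) (S l)" if "l < d" for l
          using A E[OF that] that by (auto simp: PiE_iff)
        have inn: "\<forall>l<d. \<forall>k<r. \<forall>h<r. cmod (vinner (m l) (mat_vec (n l) (A l) (y l k)) (mat_vec (n l) (A l) (y l h))
                 - vinner (n l) (y l k) (y l h)) \<le> 4 * e'"
        proof (intro allI impI)
          fix l k h assume lkh: "l < d" "k < r" "h < r"
          show "cmod (vinner (m l) (mat_vec (n l) (A l) (y l k)) (mat_vec (n l) (A l) (y l h))
                 - vinner (n l) (y l k) (y l h)) \<le> 4 * e'"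
          proof (rule JL_inner[OF JL[OF lkh(1)]])
            fix p :: nat assume "p < 4"
            then show "(\<lambda>i. y l k i + \<i>^p * y l h i) \<in> S l"
              unfolding S_def using lkh by (intro image_eqI[where x="(k, h, p)"]) auto
          qed (use unit lkh in auto)
        qed
        have dl: "4 * e' = \<epsilon> / (9 * real d * (real r powr (1 / real d)))"
          unfolding e'_def \<rho>_def by simp
        have "\<forall>c::nat \<Rightarrow> complex. \<bar>tnorm_sq m d (modes_prod (Yc d r c y) n A d) - tnorm_sq n d (Yc d r c y)\<bar>
           \<le> \<epsilon> * tnorm_sq n d (Yc d r c y)"
          using det_main[OF d r e(1) _ unit coh inn dl] e by simp
        then show "A \<in> {A \<in> space (PiM {..<d} (\<lambda>j. D (m j) (n j))).
           \<forall>c::nat \<Rightarrow> complex. let Y = (\<lambda>i. \<Sum>k<r. c k * outer d (\<lambda>l. y l k) i) in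
              \<bar>tnorm_sq m d (modes_prod Y n A d) - tnorm_sq n d Y\<bar> \<le> \<epsilon> * tnorm_sq n d Y}"
          using Asp unfolding Let_def Yc_def by simp
      qed
    qed
  qed
qed


theorem corollary2:
  "\<forall>C>0. \<exists>Ct>0. \<forall>(\<epsilon>::real) (\<eta>::real) (d::nat) (n::nat \<Rightarrow> nat) (m::nat \<Rightarrow> nat) (r::nat)
       (y::nat \<Rightarrow> nat \<Rightarrow> cvec) (D::nat \<Rightarrow> nat \<Rightarrow> cmat measure).
     0 < \<epsilon> \<and> \<epsilon> < 1/2 \<and> 0 < \<eta> \<and> \<eta> < 1/2 \<and> 2 \<le> d
     \<and> (\<forall>l<d. \<forall>k<r. vnorm_sq (n l) (y l k) = 1)
     \<and> (\<forall>c::nat \<Rightarrow> complex. (\<forall>i\<in>tidx n d. (\<Sum>k<r. c k * outer d (\<lambda>l. y l k) i) = 0)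
            \<longrightarrow> (\<forall>k<r. c k = 0))
     \<and> coherence n d r y ^ (d - 1) < 1 / (2 * real r)
     \<and> eta_optimal_with C (\<eta> / real d) D
     \<and> (\<forall>j<d. m j < n j)
     \<and> (\<forall>j<d. real (m j) \<ge> Ct * real r powr (2 / real d) * (real d)\<^sup>2 / \<epsilon>\<^sup>2
                              * ln (2 * (real r)\<^sup>2 * real d / \<eta>))
     \<longrightarrow> holds_with_prob_ge (PiM {..<d} (\<lambda>j. D (m j) (n j)))
           (\<lambda>A. \<forall>c::nat \<Rightarrow> complex.
              let Y = (\<lambda>i. \<Sum>k<r. c k * outer d (\<lambda>l. y l k) i) in
              \<bar>tnorm_sq m d (modes_prod Y n A d) - tnorm_sq n d Y\<bar> \<le> \<epsilon> * tnorm_sq n d Y)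
           (1 - \<eta>)"
  apply (intro allI impI)
  subgoal for C
    apply (rule exI[of _ "2592 * C"])
    apply (intro conjI allI impI)
     apply simp
    apply (elim conjE)
    apply (rule main_lemma; assumption)
    done
  done

end
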